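(* For all $x,y\in\mathbb{B}^2$, $$|x-y|\le 2\,\operatorname{th}\frac{h_{\mathbb{B}^2}(x,y)}{4},$$ with equality when $x=-y$.
   Context: $\mathbb{B}^2$ is the open unit disk in $\mathbb{C}$; $\operatorname{th}$ is the hyperbolic tangent. For distinct $x,y\in\mathbb{B}^2$ the Hilbert metric is $h_{\mathbb{B}^2}(x,y)=\log\frac{|u-y||x-v|}{|u-x||y-v|}$, where $u,v$ are the intersection points of the line through $x,y$ with the unit circle, labelled so that $|u-x|<|u-y|$; also $h_{\mathbb{B}^2}(x,x)=0$. *)

theory Defs
  imports Complex_Main
begin

definition hilbert_endpoints :: "complex \<Rightarrow> complex \<Rightarrow> complex \<times> complex" where
  "hilbert_endpoints x y = (SOME (u, v). cmod u = 1 \<and> cmod v = 1 \<and> u \<noteq> v \<and>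
      (\<exists>t::real. u = x + of_real t * (y - x)) \<and>
      (\<exists>t::real. v = x + of_real t * (y - x)) \<and>
      cmod (u - x) < cmod (u - y))"

definition hilbert_disk :: "complex \<Rightarrow> complex \<Rightarrow> real" where
  "hilbert_disk x y = (if x = y then 0 else
     (let (u, v) = hilbert_endpoints x y in
        ln ((cmod (u - y) * cmod (x - v)) / (cmod (u - x) * cmod (y - v)))))"

end

theory Submission imports Defs begin

lemma tanh_q: fixes X::real assumes "X>0" shows "tanh (ln X / 4) = (sqrt X - 1)/(sqrt X + 1)"
proof -
  define w where "w = X powr (1/4)"
  have w: "w > 0" using assms by (simp add: w_def)
  have lw: "ln w = ln X / 4" using assms by (simp add: w_def ln_powr)
  have w2: "w^2 = sqrt X"
  proof -
    have "w^2 = w powr 2" using w by (simp add: powr_realpow)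
    also have "\<dots> = X powr (1/2)" using assms by (simp add: w_def powr_powr)
    also have "\<dots> = sqrt X" using assms by (simp add: powr_half_sqrt)
    finally show ?thesis .
  qed
  show ?thesis using tanh_ln_real[OF w] unfolding lw w2 .
qed

lemma key: fixes p q d::real assumes p: "p>0" and q: "q>0" and d: "d\<ge>0" and L: "(1+p+q)*d \<le> 2"
  shows "d \<le> 2*tanh(ln((1+p)*(1+q)/(p*q))/4)"
    and "p = q \<Longrightarrow> (1+p+q)*d = 2 \<Longrightarrow> d = 2*tanh(ln((1+p)*(1+q)/(p*q))/4)"
proof -
  define X where "X = (1+p)*(1+q)/(p*q)"
  have X: "X > 0" using p q by (simp add: X_def)
  define S where "S = sqrt X"
  have S: "S > 0" using X by (simp add: S_def)
  have t: "tanh(ln((1+p)*(1+q)/(p*q))/4) = (S-1)/(S+1)" using tanh_q[OF X] by (simp add: S_def X_def)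
  have "((2+p+q)/(p+q))^2 \<le> X"
  proof -
    have "(1+p)*(1+q)*(p+q)^2 - p*q*(2+p+q)^2 = (1+p+q)*(p-q)^2" by (simp add: algebra_simps power2_eq_square)
    hence "p*q*(2+p+q)^2 \<le> (1+p)*(1+q)*(p+q)^2" using p q by (smt (verit) mult_nonneg_nonneg zero_le_power2)
    thus ?thesis using p q by (simp add: X_def power_divide divide_simps mult.commute)
  qed
  hence S1: "(2+p+q)/(p+q) \<le> S" unfolding S_def using real_le_rsqrt by blast
  hence "S*(p+q) \<ge> 2+p+q" using p q by (simp add: divide_simps)
  hence "2*S+2 \<le> (2*S-2)*(1+p+q)" by (simp add: algebra_simps)
  hence "2/(1+p+q) \<le> 2*((S-1)/(S+1))" using p q S by (simp add: divide_simps)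
  moreover have "d \<le> 2/(1+p+q)" using L p q by (simp add: divide_simps mult.commute)
  ultimately show "d \<le> 2*tanh(ln((1+p)*(1+q)/(p*q))/4)" unfolding t by linarith
  assume pq: "p = q" and e: "(1+p+q)*d = 2"
  have "X = ((1+p)/p)^2" using pq p by (simp add: X_def power2_eq_square)
  hence "S = (1+p)/p" using p by (simp add: S_def)
  hence "S*p = 1+p" using p by simp
  hence "(S-1)*(1+2*p) = S+1" by (simp add: algebra_simps)
  hence "(S-1)/(S+1) = 1/(1+2*p)" using p S by (simp add: divide_simps) 
  moreover have "d = 2/(1+2*p)" using e pq p by (simp add: field_simps)
  ultimately show "d = 2*tanh(ln((1+p)*(1+q)/(p*q))/4)" unfolding t by simp
qed
lemma cm2: "cmod (x + complex_of_real t * d)^2 = (Re d^2 + Im d^2)*t^2 + 2*(Re x*Re d + Im x*Im d)*t + (Re x^2 + Im x^2)"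
  unfolding cmod_power2 by (simp add: algebra_simps power2_eq_square)

lemma outside: fixes x y :: complex assumes "cmod x < 1" "cmod y < 1" "cmod (x + of_real t * (y - x)) = 1"
  shows "t < 0 \<or> t > 1"
proof (rule ccontr)
  assume "\<not> (t < 0 \<or> t > 1)"
  hence t: "0 \<le> t" "t \<le> 1" by auto
  have "x + of_real t * (y - x) = of_real (1-t) * x + of_real t * y" by (simp add: algebra_simps)
  hence "cmod (x + of_real t * (y - x)) \<le> (1-t) * cmod x + t * cmod y"
    using t by (metis abs_of_nonneg diff_ge_0_iff_ge norm_mult norm_of_real norm_triangle_ineq)
  also have "\<dots> < 1"
  proof (cases "t = 0")
    case True thus ?thesis using assms by simp
  next
    case False
    hence "t * cmod y < t" using t assms by simp
    moreover have "(1-t)*cmod x \<le> 1 - t" using t assms by (simp add: mult_left_le)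
    ultimately show ?thesis by linarith
  qed
  finally show False using assms by simp
qed

lemma endpoints_exist:
  fixes x y :: complex assumes x: "cmod x < 1" and y: "cmod y < 1" and xy: "x \<noteq> y"
  shows "\<exists>u v. cmod u = 1 \<and> cmod v = 1 \<and> u \<noteq> v \<and>
      (\<exists>t::real. u = x + of_real t * (y - x)) \<and>
      (\<exists>t::real. v = x + of_real t * (y - x)) \<and>
      cmod (u - x) < cmod (u - y)"
proof -
  define d where "d = y - x"
  define a where "a = Re d^2 + Im d^2"
  define b where "b = Re x*Re d + Im x*Im d"
  define c where "c = Re x^2 + Im x^2 - 1"
  have "d \<noteq> 0" using xy by (simp add: d_def)
  hence a: "a > 0" unfolding a_def by (simp add: complex_eq_iff sum_power2_gt_zero_iff)
  have "cmod x ^2 < 1" using x by (simp add: power_less_one_iff)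
  hence c: "c < 0" unfolding c_def cmod_power2 by simp
  define D where "D = b^2 - a*c"
  have D: "D > b^2" using a c by (simp add: D_def mult_pos_neg)
  hence sD: "sqrt D > \<bar>b\<bar>" using real_sqrt_less_mono[OF D] by simp
  have sD2: "sqrt D ^2 = D" using D by (smt (verit) real_sqrt_pow2 zero_le_power2)
  define t1 where "t1 = (-b - sqrt D)/a"
  define t2 where "t2 = (-b + sqrt D)/a"
  have root: "cmod (x + of_real t * d) = 1" if "t = t1 \<or> t = t2" for t
  proof -
    have gen: "(-b + z)^2 + 2*b*(-b + z) + a*c = z*z - (b^2 - a*c)" for z by (simp add: algebra_simps power2_eq_square)
    have sq: "sqrt D * sqrt D = D" using sD2 by (simp add: power2_eq_square)
    have at: "a*t = -b + (- sqrt D) \<or> a*t = -b + sqrt D" using that a by (auto simp: t1_def t2_def)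
    have "a*(a*t^2 + 2*b*t + c) = (a*t)^2 + 2*b*(a*t) + a*c" by (simp add: algebra_simps power2_eq_square)
    also have "\<dots> = 0" using at gen[of "sqrt D"] gen[of "- sqrt D"] sq unfolding D_def by auto
    finally have "a*t^2 + 2*b*t + c = 0" using a by simp
    hence "cmod (x + of_real t * d)^2 = 1" unfolding cm2 a_def b_def c_def by simp
    thus ?thesis using norm_ge_zero[of "x + of_real t * d"] by (auto simp: power2_eq_1_iff)
  qed
  have t1: "t1 < 0" using a sD unfolding t1_def by (simp add: divide_neg_pos)
  have t12: "t1 \<noteq> t2" using a sD unfolding t1_def t2_def by (auto simp: divide_simps)
  show ?thesis
  proof (intro exI conjI)
    show "cmod (x + of_real t1 * d) = 1" "cmod (x + of_real t2 * d) = 1" using root by auto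
    show "x + of_real t1 * d \<noteq> x + of_real t2 * d" using t12 \<open>d \<noteq> 0\<close> by simp
    show "x + of_real t1 * d = x + of_real t1 * (y - x)" "x + of_real t2 * d = x + of_real t2 * (y - x)"
      by (simp_all add: d_def)
    have "cmod (x + of_real t1 * d - x) = \<bar>t1\<bar> * cmod d" by (simp add: norm_mult)
    also have "\<dots> < \<bar>t1 - 1\<bar> * cmod d" using t1 \<open>d \<noteq> 0\<close> by (intro mult_strict_right_mono) auto
    also have "\<dots> = cmod (x + of_real t1 * d - y)"
    proof -
      have "x + of_real t1 * d - y = of_real (t1 - 1) * d" by (simp add: d_def algebra_simps)
      thus ?thesis by (simp only: norm_mult norm_of_real)
    qed
    finally show "cmod (x + of_real t1 * d - x) < cmod (x + of_real t1 * d - y)" .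
  qed
qed

theorem mainTheorem11:
  fixes x y :: complex
  assumes "cmod x < 1" and "cmod y < 1"
  shows "cmod (x - y) \<le> 2 * tanh (hilbert_disk x y / 4) \<and>
         (x = - y \<longrightarrow> cmod (x - y) = 2 * tanh (hilbert_disk x y / 4))"
proof (cases "x = y")
  case True thus ?thesis by (simp add: hilbert_disk_def)
next
  case xy: False
  define P where "P = (\<lambda>(u, v). cmod u = 1 \<and> cmod v = 1 \<and> u \<noteq> v \<and>
      (\<exists>t::real. u = x + of_real t * (y - x)) \<and>
      (\<exists>t::real. v = x + of_real t * (y - x)) \<and>
      cmod (u - x) < cmod (u - y))"
  have he: "hilbert_endpoints x y = (SOME p. P p)" unfolding hilbert_endpoints_def P_def ..
  obtain u0 v0 where "P (u0, v0)" using endpoints_exist[OF assms xy] unfolding P_def by auto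
  hence "P (hilbert_endpoints x y)" unfolding he by (rule someI)
  moreover obtain u v where uv: "hilbert_endpoints x y = (u, v)" by fastforce
  ultimately have Puv: "P (u, v)" by simp
  define d where "d = y - x"
  have d0: "d \<noteq> 0" using xy by (simp add: d_def)
  from Puv obtain s r where u: "u = x + of_real s * d" and v: "v = x + of_real r * d"
    and u1: "cmod u = 1" and v1: "cmod v = 1" and uvne: "u \<noteq> v" and lab: "cmod (u - x) < cmod (u - y)"
    unfolding P_def d_def by auto
  have so: "s < 0 \<or> s > 1" using outside[OF assms] u1 u d_def by simp
  have ro: "r < 0 \<or> r > 1" using outside[OF assms] v1 v d_def by simp
  have rs: "r \<noteq> s" using uvne u v by auto
  define a where "a = Re d^2 + Im d^2"
  define b where "b = Re x*Re d + Im x*Im d"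
  define c where "c = Re x^2 + Im x^2 - 1"
  have a: "a > 0" using d0 unfolding a_def by (simp add: complex_eq_iff sum_power2_gt_zero_iff)
  have "cmod x ^2 < 1" using assms by (simp add: power_less_one_iff)
  hence c: "c < 0" unfolding c_def cmod_power2 by simp
  have fs: "a*s^2 + 2*b*s + c = 0" using u1 cm2[of x s d] unfolding u a_def b_def c_def by simp
  have fr: "a*r^2 + 2*b*r + c = 0" using v1 cm2[of x r d] unfolding v a_def b_def c_def by simp
  have "(s-r)*(a*(s+r)+2*b) = 0" using fs fr by (simp add: algebra_simps power2_eq_square)
  hence sum: "a*(s+r)+2*b = 0" using rs by simp
  have h2b: "2*b = -a*r - a*s" using sum by (simp add: algebra_simps)
  have "c = -(a*s^2) - (2*b)*s" using fs by linarith
  also have "\<dots> = a*r*s" unfolding h2b by (simp add: algebra_simps power2_eq_square)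
  finally have "c = a*r*s" .
  hence "r*s < 0" using a c by (smt (verit) mult.assoc zero_less_mult_iff)
  have "\<bar>s\<bar> * cmod d < \<bar>s - 1\<bar> * cmod d"
  proof -
    have "u - y = of_real (s - 1) * d" unfolding u d_def by (simp add: algebra_simps)
    hence "cmod (u - y) = \<bar>s - 1\<bar> * cmod d" by (simp only: norm_mult norm_of_real)
    moreover have "cmod (u - x) = \<bar>s\<bar> * cmod d" unfolding u by (simp add: norm_mult)
    ultimately show ?thesis using lab by simp
  qed
  hence "\<bar>s\<bar> < \<bar>s - 1\<bar>" using d0 by simp
  hence s: "s < 0" using so by linarith
  hence r: "r > 1" using \<open>r*s < 0\<close> ro by (smt (verit) mult_nonpos_nonpos)
  define p where "p = -s"
  define q where "q = r - 1"
  have p: "p > 0" and q: "q > 0" using s r by (auto simp: p_def q_def)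
  have hd: "hilbert_disk x y = ln ((1+p)*(1+q)/(p*q))"
  proof -
    have e1: "cmod (u - y) = (1+p) * cmod d"
    proof -
      have "u - y = of_real (s - 1) * d" unfolding u d_def by (simp add: algebra_simps)
      hence "cmod (u - y) = \<bar>s - 1\<bar> * cmod d" by (simp only: norm_mult norm_of_real)
      thus ?thesis using s by (simp add: p_def)
    qed
    have e2: "cmod (x - v) = (1+q) * cmod d" using r by (simp add: v norm_mult q_def)
    have e3: "cmod (u - x) = p * cmod d" using s by (simp add: u norm_mult p_def)
    have e4: "cmod (y - v) = q * cmod d"
    proof -
      have "y - v = of_real (1 - r) * d" unfolding v d_def by (simp add: algebra_simps)
      hence "cmod (y - v) = \<bar>1 - r\<bar> * cmod d" by (simp only: norm_mult norm_of_real)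
      thus ?thesis using r by (simp add: q_def)
    qed
    have "(cmod (u - y) * cmod (x - v)) / (cmod (u - x) * cmod (y - v)) = (1+p)*(1+q)/(p*q)"
      unfolding e1 e2 e3 e4 using d0 p q by (simp add: field_simps)
    thus ?thesis unfolding hilbert_disk_def using xy uv by simp
  qed
  have uvd: "cmod (u - v) = (1+p+q) * cmod d"
  proof -
    have "u - v = of_real (s - r) * d" unfolding u v by (simp add: algebra_simps)
    hence "cmod (u - v) = \<bar>s - r\<bar> * cmod d" by (simp only: norm_mult norm_of_real)
    thus ?thesis using s r by (simp add: p_def q_def)
  qed
  have "cmod (u - v) \<le> 2" using u1 v1 norm_triangle_ineq4[of u v] by simp
  hence L: "(1+p+q) * cmod d \<le> 2" using uvd by simp
  have nd: "cmod (x - y) = cmod d" by (simp add: d_def norm_minus_commute)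
  show ?thesis
  proof
    show "cmod (x - y) \<le> 2 * tanh (hilbert_disk x y / 4)" unfolding nd hd using key(1)[OF p q _ L] by simp
    show "x = - y \<longrightarrow> cmod (x - y) = 2 * tanh (hilbert_disk x y / 4)"
    proof
      assume xmy: "x = - y"
      hence dx: "d = -2*x" by (simp add: d_def)
      have "a = 4*(Re x^2+Im x^2)" "b = -2*(Re x^2+Im x^2)" unfolding a_def b_def dx
        by (simp_all add: power2_eq_square)
      moreover have "Re x^2+Im x^2 > 0" using a unfolding a_def dx by (simp add: power2_eq_square)
      ultimately have "s + r = 1" using sum by (smt (verit) mult_cancel_left2 mult.commute distrib_left)
      hence pq: "p = q" by (simp add: p_def q_def)
      have "u + v = 2*x + of_real (s+r) * d" unfolding u v by (simp add: algebra_simps)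
      also have "\<dots> = 0" using \<open>s + r = 1\<close> dx by simp
      finally have "v = - u" by (simp add: add_eq_0_iff)
      hence "cmod (u - v) = 2" using u1 by (simp add: norm_mult[of 2 u, simplified])
      hence "(1+p+q) * cmod d = 2" using uvd by simp
      thus "cmod (x - y) = 2 * tanh (hilbert_disk x y / 4)" unfolding nd hd using key(2)[OF p q _ L pq] by simp
    qed
  qed
qed

end
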